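(* Let $E$ be a set and $\sigma = (\sigma_I)_{I \in \mathcal{F}(E)}$ a virtual permutation of $E$. Let $x, y \in E$. Then exactly one of the following holds: (a) for every finite $I \subset E$ containing $x$ and $y$, the elements $x$ and $y$ lie in the same cycle of $\sigma_I$; (b) for every finite $I \subset E$ containing $x$ and $y$, the elements $x$ and $y$ lie in different cycles of $\sigma_I$. Moreover, the relation "$x$ and $y$ satisfy (a)" is an equivalence relation on $E$.
   Context: $\mathcal{F}(E)$ denotes the set of finite subsets of $E$, and $\Sigma_I$ the symmetric group of a finite set $I$. For finite $I \subset J$ and a permutation $\tau$ of $J$, "removing the elements of $J\setminus I$ from the cycle structure of $\tau$" produces the permutation $\pi_{J,I}(\tau)$ of $I$ defined by $\pi_{J,I}(\tau)(x) = \tau^m(x)$ where $m \geq 1$ is the smallest integer with $\tau^m(x) \in I$. A virtual permutation of $E$ is a family $(\sigma_I)_{I \in \mathcal{F}(E)}$ with $\sigma_I \in \Sigma_I$ and $\sigma_I = \pi_{J,I}(\sigma_J)$ whenever $I \subset J$ are finite subsets of $E$. *)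

theory Defs
  imports "HOL-Combinatorics.Permutations"
begin

text \<open>For x in I, the result is tau^m(x) with m >= 1 least such that tau^m(x) lies in I;
  outside I the result is the identity (permutations of I are functions fixing
  everything outside I, as in the library predicate permutes).\<close>
definition remove_from_cycles :: "'a set \<Rightarrow> ('a \<Rightarrow> 'a) \<Rightarrow> ('a \<Rightarrow> 'a)" where
  "remove_from_cycles I tau x =
     (if x \<in> I then (tau ^^ (LEAST m. m \<ge> 1 \<and> (tau ^^ m) x \<in> I)) x else x)"

definition virtual_permutation :: "'a set \<Rightarrow> ('a set \<Rightarrow> 'a \<Rightarrow> 'a) \<Rightarrow> bool" where
  "virtual_permutation E sigma \<longleftrightarrow>
     (\<forall>I. finite I \<and> I \<subseteq> E \<longrightarrow> sigma I permutes I) \<and>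
     (\<forall>I J. finite J \<and> J \<subseteq> E \<and> I \<subseteq> J \<longrightarrow> sigma I = remove_from_cycles I (sigma J))"

definition same_cycle :: "('a \<Rightarrow> 'a) \<Rightarrow> 'a \<Rightarrow> 'a \<Rightarrow> bool" where
  "same_cycle p x y \<longleftrightarrow> (\<exists>n. (p ^^ n) x = y)"

end

theory Submission
  imports Defs "HOL-Combinatorics.Cycles"
begin

lemma fin_perm_id:
  assumes "p permutes J" "finite J"
  obtains N where "p ^^ N = id" "N > 0"
  using permutation_is_nilpotent[OF permutes_imp_permutation[OF assms(2,1)]] by blast

lemma rfc_step:
  assumes "p permutes J" "finite J" "z \<in> I"
  shows "\<exists>m\<ge>1. (p ^^ m) z \<in> I \<and> remove_from_cycles I p z = (p ^^ m) z
           \<and> (\<forall>k. k \<ge> 1 \<and> (p ^^ k) z \<in> I \<longrightarrow> m \<le> k)"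
proof -
  obtain N where N: "p ^^ N = id" "N > 0" using fin_perm_id[OF assms(1,2)] .
  have ex: "\<exists>m. m \<ge> 1 \<and> (p ^^ m) z \<in> I" using N assms(3) by (intro exI[of _ N]) auto
  define m where "m = (LEAST m. m \<ge> 1 \<and> (p ^^ m) z \<in> I)"
  have "m \<ge> 1 \<and> (p ^^ m) z \<in> I" unfolding m_def using LeastI_ex[OF ex] .
  moreover have "\<forall>k. k \<ge> 1 \<and> (p ^^ k) z \<in> I \<longrightarrow> m \<le> k"
    unfolding m_def by (auto intro: Least_le)
  ultimately show ?thesis using assms(3)
    by (intro exI[of _ m]) (auto simp: remove_from_cycles_def m_def)
qed

lemma rfc_fwd:
  assumes "p permutes J" "finite J" "x \<in> I"
  shows "(remove_from_cycles I p ^^ n) x \<in> I \<and> (\<exists>s. (remove_from_cycles I p ^^ n) x = (p ^^ s) x)"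
proof (induction n)
  case 0 then show ?case using assms by (auto intro: exI[of _ 0])
next
  case (Suc n)
  then obtain s where s: "(remove_from_cycles I p ^^ n) x = (p ^^ s) x" and inI: "(remove_from_cycles I p ^^ n) x \<in> I" by blast
  obtain m where m: "(p ^^ m) ((remove_from_cycles I p ^^ n) x) \<in> I"
     "remove_from_cycles I p ((remove_from_cycles I p ^^ n) x) = (p ^^ m) ((remove_from_cycles I p ^^ n) x)"
    using rfc_step[OF assms(1,2) inI] by blast
  have "(p ^^ m) ((p ^^ s) x) = (p ^^ (m + s)) x" by (simp add: funpow_add)
  then show ?case using m s by auto
qed

lemma rfc_bwd:
  assumes "p permutes J" "finite J"
  shows "x \<in> I \<Longrightarrow> (p ^^ n) x \<in> I \<Longrightarrow> \<exists>k. (remove_from_cycles I p ^^ k) x = (p ^^ n) x"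
proof (induction n arbitrary: x rule: less_induct)
  case (less n)
  show ?case
  proof (cases "n = 0")
    case True then show ?thesis by (auto intro: exI[of _ 0])
  next
    case False
    obtain m where m: "m \<ge> 1" "(p ^^ m) x \<in> I" "remove_from_cycles I p x = (p ^^ m) x"
      "\<forall>k. k \<ge> 1 \<and> (p ^^ k) x \<in> I \<longrightarrow> m \<le> k"
      using rfc_step[OF assms less.prems(1)] by blast
    have "m \<le> n" using m(4) False less.prems(2) by auto
    have eq: "(p ^^ (n - m)) ((p ^^ m) x) = (p ^^ n) x"
      using \<open>m \<le> n\<close> by (simp add: funpow_add[symmetric, THEN fun_cong, simplified])
    obtain k where "(remove_from_cycles I p ^^ k) ((p ^^ m) x) = (p ^^ (n - m)) ((p ^^ m) x)"
      using less.IH[of "n - m" "(p ^^ m) x"] m(1,2) False eq less.prems(2) by auto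
    then have "(remove_from_cycles I p ^^ (Suc k)) x = (p ^^ n) x"
      using eq m(3) by (simp add: funpow_Suc_right del: funpow.simps)
    then show ?thesis by blast
  qed
qed

lemma same_cycle_transfer:
  assumes "virtual_permutation E sigma" "finite J" "J \<subseteq> E" "I \<subseteq> J" "x \<in> I" "y \<in> I"
  shows "same_cycle (sigma I) x y \<longleftrightarrow> same_cycle (sigma J) x y"
proof -
  have pJ: "sigma J permutes J" using assms unfolding virtual_permutation_def by blast
  have sI: "sigma I = remove_from_cycles I (sigma J)" using assms unfolding virtual_permutation_def by blast
  show ?thesis unfolding same_cycle_def sI
    using rfc_fwd[OF pJ assms(2) assms(5)] rfc_bwd[OF pJ assms(2) assms(5)] assms(6) by metis
qed

lemma same_cycle_sym:
  assumes "p permutes J" "finite J" "same_cycle p x y"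
  shows "same_cycle p y x"
proof -
  obtain N where N: "p ^^ N = id" "N > 0" using fin_perm_id[OF assms(1,2)] .
  obtain n where n: "(p ^^ n) x = y" using assms(3) unfolding same_cycle_def by blast
  have "(p ^^ ((N - 1) * n + n)) x = x"
  proof -
    have "(N - 1) * n + n = N * n" using N(2) by (cases N) auto
    moreover have "p ^^ (N * n) = id" using N(1) funpow_mult[where f=p and m=N and n=n] by simp
    ultimately show ?thesis by simp
  qed
  then have "(p ^^ ((N - 1) * n)) y = x" using n by (simp add: funpow_add)
  then show ?thesis unfolding same_cycle_def by blast
qed

lemma same_cycle_trans:
  assumes "same_cycle p x y" "same_cycle p y z" shows "same_cycle p x z"
proof -
  obtain a b where "(p ^^ a) x = y" "(p ^^ b) y = z" using assms unfolding same_cycle_def by blast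
  then have "(p ^^ (b + a)) x = z" by (simp add: funpow_add)
  then show ?thesis unfolding same_cycle_def by blast
qed

theorem proposition2p5:
  fixes E :: "'a set" and sigma :: "'a set \<Rightarrow> 'a \<Rightarrow> 'a"
  assumes "virtual_permutation E sigma"
  shows "(\<forall>x\<in>E. \<forall>y\<in>E.
           ((\<forall>I. finite I \<and> I \<subseteq> E \<and> x \<in> I \<and> y \<in> I \<longrightarrow> same_cycle (sigma I) x y) \<and>
            \<not> (\<forall>I. finite I \<and> I \<subseteq> E \<and> x \<in> I \<and> y \<in> I \<longrightarrow> \<not> same_cycle (sigma I) x y)) \<or>
           (\<not> (\<forall>I. finite I \<and> I \<subseteq> E \<and> x \<in> I \<and> y \<in> I \<longrightarrow> same_cycle (sigma I) x y) \<and>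
            (\<forall>I. finite I \<and> I \<subseteq> E \<and> x \<in> I \<and> y \<in> I \<longrightarrow> \<not> same_cycle (sigma I) x y)))
        \<and> equiv E {(x, y). x \<in> E \<and> y \<in> E \<and>
           (\<forall>I. finite I \<and> I \<subseteq> E \<and> x \<in> I \<and> y \<in> I \<longrightarrow> same_cycle (sigma I) x y)}"
proof -
  note tr = same_cycle_transfer[OF assms]
  have indep: "same_cycle (sigma I) x y \<longleftrightarrow> same_cycle (sigma I') x y"
    if "finite I" "I \<subseteq> E" "x \<in> I" "y \<in> I" "finite I'" "I' \<subseteq> E" "x \<in> I'" "y \<in> I'" for I I' x y
  proof -
    have "finite (I \<union> I')" "I \<union> I' \<subseteq> E" using that by auto
    then show ?thesis using tr[of "I \<union> I'" I x y] tr[of "I \<union> I'" I' x y] that by blast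
  qed
  have pJ: "sigma I permutes I" if "finite I" "I \<subseteq> E" for I
    using assms that unfolding virtual_permutation_def by blast
  let ?A = "\<lambda>x y. \<forall>I. finite I \<and> I \<subseteq> E \<and> x \<in> I \<and> y \<in> I \<longrightarrow> same_cycle (sigma I) x y"
  let ?B = "\<lambda>x y. \<forall>I. finite I \<and> I \<subseteq> E \<and> x \<in> I \<and> y \<in> I \<longrightarrow> \<not> same_cycle (sigma I) x y"
  have part1: "(?A x y \<and> \<not> ?B x y) \<or> (\<not> ?A x y \<and> ?B x y)"
    if "x \<in> E" "y \<in> E" for x y
  proof -
    have K: "finite {x,y}" "{x,y} \<subseteq> E" "x \<in> {x,y}" "y \<in> {x,y}" using that by auto
    show ?thesis
    proof (cases "same_cycle (sigma {x,y}) x y")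
      case True
      have "?A x y"
      proof (intro allI impI)
        fix I assume "finite I \<and> I \<subseteq> E \<and> x \<in> I \<and> y \<in> I"
        then show "same_cycle (sigma I) x y" using indep[OF K, of I] True by blast
      qed
      moreover have "\<not> ?B x y" using K True by blast
      ultimately show ?thesis by blast
    next
      case False
      have "?B x y"
      proof (intro allI impI)
        fix I assume "finite I \<and> I \<subseteq> E \<and> x \<in> I \<and> y \<in> I"
        then show "\<not> same_cycle (sigma I) x y" using indep[OF K, of I] False by blast
      qed
      moreover have "\<not> ?A x y" using K False by blast
      ultimately show ?thesis by blast
    qed
  qed
  have eq: "equiv E {(x, y). x \<in> E \<and> y \<in> E \<and> ?A x y}"
  proof (rule equivI)
    show "refl_on E {(x, y). x \<in> E \<and> y \<in> E \<and> ?A x y}"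
    proof (rule refl_onI)
      fix x assume "x \<in> E"
      moreover have "same_cycle p x x" for p :: "'a \<Rightarrow> 'a"
        unfolding same_cycle_def by (rule exI[of _ 0]) simp
      ultimately show "(x, x) \<in> {(x, y). x \<in> E \<and> y \<in> E \<and> ?A x y}" by simp
    qed
    show "sym {(x, y). x \<in> E \<and> y \<in> E \<and> ?A x y}"
    proof (rule symI)
      fix x y assume "(x, y) \<in> {(x, y). x \<in> E \<and> y \<in> E \<and> ?A x y}"
      then have h: "x \<in> E" "y \<in> E" "?A x y" by auto
      have "?A y x"
      proof (intro allI impI)
        fix I assume I: "finite I \<and> I \<subseteq> E \<and> y \<in> I \<and> x \<in> I"
        then have "same_cycle (sigma I) x y" using h(3) by blast
        then show "same_cycle (sigma I) y x" using same_cycle_sym[OF pJ] I by blast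
      qed
      then show "(y, x) \<in> {(x, y). x \<in> E \<and> y \<in> E \<and> ?A x y}" using h by simp
    qed
    show "trans {(x, y). x \<in> E \<and> y \<in> E \<and> ?A x y}"
    proof (rule transI)
      fix x y z
      assume "(x, y) \<in> {(x, y). x \<in> E \<and> y \<in> E \<and> ?A x y}" "(y, z) \<in> {(x, y). x \<in> E \<and> y \<in> E \<and> ?A x y}"
      then have xyz: "x \<in> E" "y \<in> E" "z \<in> E" and h1: "?A x y" and h2: "?A y z" by auto
      have "?A x z"
      proof (intro allI impI)
        fix I assume I: "finite I \<and> I \<subseteq> E \<and> x \<in> I \<and> z \<in> I"
        have J: "finite (insert y I)" "insert y I \<subseteq> E" using I xyz by auto
        have "same_cycle (sigma (insert y I)) x y" using h1 J I by blast
        moreover have "same_cycle (sigma (insert y I)) y z" using h2 J I by blast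
        ultimately have "same_cycle (sigma (insert y I)) x z" by (rule same_cycle_trans)
        then show "same_cycle (sigma I) x z"
          using tr[of "insert y I" I x z] I J by blast
      qed
      then show "(x, z) \<in> {(x, y). x \<in> E \<and> y \<in> E \<and> ?A x y}" using xyz by simp
    qed
  qed auto
  show ?thesis using part1 eq by blast
qed

end
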